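(* Let $\Lambda_0\subset\mathbb{R}^n$ be an $n$-dimensional lattice of density $\beta=e^{n\delta}$, used over an additive circularly-symmetric noise (ACSN) channel whose noise norm $\|z\|$ has density $f_{\|z\|}$. For $r>0$ define $$\alpha(r)=\inf_{\alpha'\in\mathcal{A}_{2r}}\ \sup_{0<x\le 2e^{\delta}r}\alpha'(x).$$ Then the error probability of the maximum-likelihood (nearest-lattice-point) decoder satisfies, for every $r>0$, $$P_e(\Lambda_0)\le \alpha(r)\,\beta V_n\int_0^{r}f_{\|z\|}(\rho)\rho^n\,d\rho+\int_r^\infty f_{\|z\|}(\rho)\,d\rho,$$ and hence $P_e(\Lambda_0)$ is at most the minimum over $r$ of the right-hand side.
   Context: An ACSN channel: the receiver observes $y=\lambda+z$, where $\lambda$ is the transmitted lattice point and $z\in\mathbb{R}^n$ is noise whose distribution is isotropic (invariant under orthogonal maps) with density a non-increasing function of $\|z\|$; $f_{\|z\|}$ is the density of $\|z\|$. The ML decoder errs when $z$ is not in the Voronoi cell $\{y:\|y\|<\|y-\lambda\|\ \forall\lambda\in\Lambda_0\setminus\{0\}\}$ of $0$; $P_e(\Lambda_0)$ is this probability. $V_n$ is the volume of the unit $n$-ball, $\beta=1/\det\Lambda_0$, $\delta=\frac1n\ln\beta$. The distance series $0<\lambda_1<\lambda_2<\cdots$ lists the distinct norms of nonzero lattice vectors, $\mathcal{N}_j=\#\{\lambda\in\Lambda_0:\|\lambda\|=\lambda_j\}$, and $\widetilde\lambda_j=e^{\delta}\lambda_j$. For $L>0$, $\mathcal{A}_L$ is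 the set of functions $\alpha'(x)=N'(x)/(nV_nx^{n-1})$ ($x>0$), where $N'\ge0$ is a locally integrable function on $(0,\infty)$ with $\sum_{j:\widetilde\lambda_j\le t}\mathcal{N}_j\le\int_0^tN'(x)\,dx$ for all $t\in(0,e^{\delta}L]$. (In the paper, $\alpha(r)=\max_{x\le 2e^{\delta}r}\alpha^{\mathrm{opt}}(x)$ with $\alpha^{\mathrm{opt}}$ a minimizer of this min–max problem.) *)

theory Defs
  imports "HOL-Probability.Probability"
begin

definition lattice_of :: "real^'n^'n \<Rightarrow> (real^'n) set" where
  "lattice_of B = range (\<lambda>k::int^'n. B *v (\<chi> i. real_of_int (k $ i)))"

definition voronoi0 :: "(real^'n) set \<Rightarrow> (real^'n) set" where
  "voronoi0 L = {y. \<forall>l\<in>L - {0}. norm y < norm (y - l)}"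

text \<open>Sum of N_j over the indices j of the distance series with e^delta * lambda_j <= t.
  The distance series is indexed by its (distinct) values rho = lambda_j,
  and N_j = card of the shell of norm rho.\<close>
definition shell_sum :: "(real^'n) set \<Rightarrow> real \<Rightarrow> real \<Rightarrow> real" where
  "shell_sum L \<delta> t =
     (\<Sum>\<rho>\<in>{\<rho>\<in>norm ` (L - {0}). exp \<delta> * \<rho> \<le> t}. real (card {l\<in>L. norm l = \<rho>}))"

definition A_set :: "(real^'n) set \<Rightarrow> real \<Rightarrow> real \<Rightarrow> (real \<Rightarrow> real) set" where
  "A_set L \<delta> Lr = {\<alpha>'. \<exists>N' :: real \<Rightarrow> real.
      (\<forall>x>0. 0 \<le> N' x) \<and>
      (\<forall>a b. 0 < a \<longrightarrow> a \<le> b \<longrightarrow> set_integrable lborel {a..b} N') \<and>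
      (\<forall>x>0. \<alpha>' x = N' x /
          (real CARD('n) * measure lborel (ball (0::real^'n) 1) * x ^ (CARD('n) - 1))) \<and>
      (\<forall>t\<in>{0<..exp \<delta> * Lr}.
          ennreal (shell_sum L \<delta> t) \<le> (\<integral>\<^sup>+ x\<in>{0<..t}. ennreal (N' x) \<partial>lborel))}"

definition alpha_fn :: "(real^'n) set \<Rightarrow> real \<Rightarrow> real \<Rightarrow> ennreal" where
  "alpha_fn L \<delta> r = (INF \<alpha>'\<in>A_set L \<delta> (2 * r). SUP x\<in>{0<..2 * exp \<delta> * r}. ennreal (\<alpha>' x))"

end

theory Submission
  imports Defs
begin

lemma emeasure_lborel_ball_transl:
  fixes x y :: "'a::euclidean_space"
  shows "emeasure lborel (ball x r) = emeasure lborel (ball y r)"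
proof (cases "r \<ge> 0")
  case True
  have "measure lborel (ball x r) = measure lborel (ball y r)"
    using content_ball_conv_unit_ball[OF True, of x] content_ball_conv_unit_ball[OF True, of y] by simp
  then show ?thesis
    using emeasure_lborel_ball_finite[of x r] emeasure_lborel_ball_finite[of y r]
    by (simp add: emeasure_eq_ennreal_measure)
next
  case False then show ?thesis by (simp add: ball_empty)
qed

lemma orth_open_invariant:
  fixes H :: "'a::euclidean_space \<Rightarrow> 'a"
  assumes H: "orthogonal_transformation H" and U: "open U"
  shows "emeasure lborel (H ` U) = emeasure lborel U"
proof -
  define K where "K = {(x, \<rho>). 0 < \<rho> \<and> ball x \<rho> \<subseteq> U}"
  have cov: "\<exists>i. i \<in> K \<and> x \<in> ball (fst i) (snd i) \<and> snd i < d" if "x \<in> U" "0 < d" for x d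
  proof -
    obtain e where e: "e > 0" "ball x e \<subseteq> U" using U \<open>x \<in> U\<close> open_contains_ball by blast
    show ?thesis
      by (rule exI[of _ "(x, min e (d/2))"]) (use e \<open>0 < d\<close> in \<open>auto simp: K_def\<close>)
  qed
  obtain C where C: "countable C" "C \<subseteq> K"
     "pairwise (\<lambda>i j. disjnt (ball (fst i) (snd i)) (ball (fst j) (snd j))) C"
     "negligible(U - (\<Union>i \<in> C. ball (fst i) (snd i)))"
    using Vitali_covering_theorem_balls[of U K fst snd, OF cov] by blast
  define B where "B = (\<Union>i \<in> C. ball (fst i) (snd i))"
  define N where "N = U - B"
  have BU: "B \<subseteq> U" using C(2) unfolding B_def K_def by fastforce
  have lin: "linear H" using H orthogonal_transformation_linear by blast
  have inj: "inj H" using H orthogonal_transformation_inj by blast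
  have contH: "continuous_on UNIV H" using lin linear_continuous_on linear_linear by blast
  have Bs: "B \<in> sets borel" unfolding B_def using C(1) by (intro sets.countable_UN'') auto
  have Ns: "N \<in> sets borel" unfolding N_def using Bs U by auto
  have Nnull: "N \<in> null_sets lborel"
  proof -
    have "N \<in> null_sets lebesgue" using C(4) by (simp add: N_def B_def negligible_iff_null_sets)
    then show ?thesis using Ns
      by (metis null_sets_completion_iff sets_lborel)
  qed
  have HN: "negligible (H ` N)"
  proof (rule negligible_locally_Lipschitz_image)
    show "negligible N" using Nnull by (simp add: negligible_iff_null_sets null_sets_completionI)
    fix x assume "x \<in> N"
    show "\<exists>T B. open T \<and> x \<in> T \<and> (\<forall>y\<in>N \<inter> T. norm (H y - H x) \<le> B * norm (y - x))"
      by (rule exI[of _ UNIV], rule exI[of _ 1])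
        (simp add: linear_diff[OF lin, symmetric] orthogonal_transformation_norm[OF H])
  qed auto
  have HNs: "H ` N \<in> sets borel"
  proof -
    have "H ` N = inv H -` N"
      using orthogonal_transformation_bij[OF H] by (auto simp: bij_def surj_f_inv_f) (metis bij_inv_eq_iff orthogonal_transformation_bij[OF H] image_eqI)
    moreover have "inv H \<in> borel_measurable borel"
      using orthogonal_transformation_inv[OF H] orthogonal_transformation_linear
      by (intro borel_measurable_continuous_onI linear_continuous_on) (simp add: linear_linear)
    ultimately show ?thesis using Ns by (simp add: measurable_sets_borel)
  qed
  have HNnull: "H ` N \<in> null_sets lborel"
    using HN HNs by (metis negligible_iff_null_sets null_sets_completion_iff sets_lborel)
  have Ueq: "U = B \<union> N" using BU by (auto simp: N_def)
  have disj: "disjoint_family_on (\<lambda>i. ball (fst i) (snd i)) C"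
    using C(3) by (auto simp: disjoint_family_on_def pairwise_def disjnt_def)
  have disjH: "disjoint_family_on (\<lambda>i. H ` ball (fst i) (snd i)) C"
    using disj inj by (auto simp: disjoint_family_on_def inj_eq image_Int[symmetric])
  have Hball: "H ` ball x \<rho> = ball (H x) \<rho>" for x \<rho>
    using image_orthogonal_transformation_ball[OF H] by simp
  have eB: "emeasure lborel B = (\<integral>\<^sup>+i. emeasure lborel (ball (fst i) (snd i)) \<partial>count_space C)"
    unfolding B_def by (rule emeasure_UN_countable) (use C(1) disj in auto)
  have eHB: "emeasure lborel (H ` B) = (\<integral>\<^sup>+i. emeasure lborel (H ` ball (fst i) (snd i)) \<partial>count_space C)"
    unfolding B_def image_UN by (rule emeasure_UN_countable) (use C(1) disjH Hball in auto)
  have "emeasure lborel (H ` B) = emeasure lborel B"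
    unfolding eB eHB Hball by (metis emeasure_lborel_ball_transl)
  moreover have "emeasure lborel (H ` U) = emeasure lborel (H ` B)"
    unfolding Ueq image_Un
    by (rule emeasure_Un_null_set) (use HNnull C(1) in \<open>auto simp: image_UN B_def Hball intro!: sets.countable_UN''\<close>)
  moreover have "emeasure lborel U = emeasure lborel B"
    unfolding Ueq by (rule emeasure_Un_null_set) (use Nnull Bs in auto)
  ultimately show ?thesis by simp
qed

lemma orth_distr_lborel:
  fixes H :: "'a::euclidean_space \<Rightarrow> 'a"
  assumes H: "orthogonal_transformation H"
  shows "distr lborel borel H = lborel"
proof (rule lborel_eqI[symmetric])
  have lin: "linear H" using H orthogonal_transformation_linear by blast
  have Hm: "H \<in> borel_measurable borel"
    using lin by (intro borel_measurable_continuous_onI linear_continuous_on) (simp add: linear_linear)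
  have bij: "bij H" using orthogonal_transformation_bij[OF H] .
  fix l u :: 'a assume "\<And>b. b \<in> Basis \<Longrightarrow> l \<bullet> b \<le> u \<bullet> b"
  then have eq: "emeasure lborel (box l u) = (\<Prod>b\<in>Basis. (u - l) \<bullet> b)"
    by (simp add: emeasure_lborel_box_eq)
  have pre: "H -` box l u = inv H ` box l u"
    using bij by (simp add: bij_vimage_eq_inv_image)
  have "emeasure (distr lborel borel H) (box l u) = emeasure lborel (H -` box l u)"
    using Hm by (simp add: emeasure_distr)
  also have "\<dots> = emeasure lborel (box l u)"
    unfolding pre by (rule orth_open_invariant[OF orthogonal_transformation_inv[OF H]]) (simp add: open_box)
  finally show "emeasure (distr lborel borel H) (box l u) = (\<Prod>b\<in>Basis. (u - l) \<bullet> b)"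
    using eq by simp
qed simp

lemma orth_nn_integral:
  fixes H :: "'a::euclidean_space \<Rightarrow> 'a"
  assumes H: "orthogonal_transformation H" and f: "f \<in> borel_measurable borel"
  shows "(\<integral>\<^sup>+x. f (H x) \<partial>lborel) = (\<integral>\<^sup>+x. f x \<partial>lborel)"
proof -
  have lin: "linear H" using H orthogonal_transformation_linear by blast
  have Hm: "H \<in> measurable lborel borel"
    using lin by (simp add: borel_measurable_continuous_onI linear_continuous_on linear_linear)
  have "(\<integral>\<^sup>+x. f x \<partial>lborel) = (\<integral>\<^sup>+x. f x \<partial>distr lborel borel H)"
    by (simp add: orth_distr_lborel[OF H])
  also have "\<dots> = (\<integral>\<^sup>+x. f (H x) \<partial>lborel)"
    using Hm f by (simp add: nn_integral_distr)
  finally show ?thesis by simp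
qed

lemma emeasure_ball_cart:
  fixes z :: "real^'n"
  assumes "0 \<le> \<rho>"
  shows "emeasure lborel (ball z \<rho>) = ennreal (\<rho> ^ CARD('n) * measure lborel (ball (0::real^'n) 1))"
    and "emeasure lborel (cball z \<rho>) = ennreal (\<rho> ^ CARD('n) * measure lborel (ball (0::real^'n) 1))"
proof -
  have m: "measure lborel (ball z \<rho>) = \<rho> ^ CARD('n) * measure lborel (ball (0::real^'n) 1)"
    using content_ball_conv_unit_ball[OF assms, of z] by simp
  show "emeasure lborel (ball z \<rho>) = ennreal (\<rho> ^ CARD('n) * measure lborel (ball (0::real^'n) 1))"
    using emeasure_lborel_ball_finite[of z \<rho>] m by (simp add: emeasure_eq_ennreal_measure)
  have "measure lborel (cball z \<rho>) = measure lborel (ball z \<rho>)"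
    by (rule content_cball_conv_ball)
  then show "emeasure lborel (cball z \<rho>) = ennreal (\<rho> ^ CARD('n) * measure lborel (ball (0::real^'n) 1))"
    using emeasure_lborel_cball_finite[of z \<rho>] m by (simp add: emeasure_eq_ennreal_measure)
qed


lemma int_box_finite: "finite {k::int^'n. \<forall>i. k$i \<in> {-m..m}}"
proof -
  have "{k::int^'n. \<forall>i. k$i \<in> {-m..m}} \<subseteq> vec_lambda ` (PiE UNIV (\<lambda>_. {-m..m}))"
  proof
    fix k :: "int^'n" assume "k \<in> {k::int^'n. \<forall>i. k$i \<in> {-m..m}}"
    then have "vec_nth k \<in> PiE UNIV (\<lambda>_. {-m..m})" by auto
    then show "k \<in> vec_lambda ` (PiE UNIV (\<lambda>_. {-m..m}))"
      by (metis image_eqI vec_nth_inverse)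
  qed
  moreover have "finite (PiE (UNIV::'n set) (\<lambda>_. {-m..m}))" by (intro finite_PiE) auto
  ultimately show ?thesis using finite_subset by blast
qed

lemma lattice_finite:
  fixes B :: "real^'n^'n"
  assumes "det B \<noteq> 0"
  shows "finite {l \<in> lattice_of B. norm l \<le> R}"
proof -
  obtain Bi where Bi: "Bi ** B = mat 1"
    using invertible_det_nz[of B] assms unfolding invertible_def by blast
  obtain K where K: "K > 0" "\<And>x. norm (Bi *v x) \<le> norm x * K"
    using bounded_linear.pos_bounded[OF matrix_vector_mul_bounded_linear[of Bi]] by blast
  define m where "m = \<lceil>R * K\<rceil>"
  define kv where "kv k = (\<chi> i. real_of_int (k$i))" for k :: "int^'n"
  have "{l \<in> lattice_of B. norm l \<le> R} \<subseteq> (\<lambda>k. B *v kv k) ` {k::int^'n. \<forall>i. k$i \<in> {-m..m}}"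
  proof
    fix l assume l: "l \<in> {l \<in> lattice_of B. norm l \<le> R}"
    then obtain k where k: "l = B *v kv k" by (auto simp: lattice_of_def kv_def)
    have "Bi *v l = kv k" using Bi by (simp add: k matrix_vector_mul_assoc)
    then have "norm (kv k) \<le> norm l * K" using K(2)[of l] by simp
    also have "\<dots> \<le> R * K" using l K(1) by (intro mult_right_mono) auto
    finally have nk: "norm (kv k) \<le> R * K" .
    have "\<forall>i. k$i \<in> {-m..m}"
    proof
      fix i
      have "\<bar>real_of_int (k$i)\<bar> \<le> R * K"
        using component_le_norm_cart[of "kv k" i] nk by (simp add: kv_def)
      then have "\<bar>real_of_int (k$i)\<bar> \<le> real_of_int m" unfolding m_def
        by (meson le_of_int_ceiling order_trans)
      then show "k$i \<in> {-m..m}" by auto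
    qed
    then show "l \<in> (\<lambda>k. B *v kv k) ` {k::int^'n. \<forall>i. k$i \<in> {-m..m}}" using k by blast
  qed
  then show ?thesis using int_box_finite finite_subset by blast
qed

lemma lattice_countable:
  fixes B :: "real^'n^'n"
  assumes "det B \<noteq> 0"
  shows "countable (lattice_of B)"
proof -
  have "lattice_of B = (\<Union>N::nat. {l \<in> lattice_of B. norm l \<le> real N})"
    by (auto intro: real_arch_simple)
  moreover have "countable (\<Union>N::nat. {l \<in> lattice_of B. norm l \<le> real N})"
    by (rule countable_UN) (auto intro: countable_finite lattice_finite[OF assms])
  ultimately show ?thesis by simp
qed


definition Dset :: "real \<Rightarrow> real^'n \<Rightarrow> (real^'n) set" where
  "Dset r l = {z. norm (z - l) \<le> norm z \<and> norm z < r}"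

definition psi :: "(real \<Rightarrow> real) \<Rightarrow> real \<Rightarrow> real^'n \<Rightarrow> ennreal" where
  "psi g r l = (\<integral>\<^sup>+ z. ennreal (g (norm z)) * indicator (Dset r l) z \<partial>lborel)"

lemma Dset_measurable[measurable]: "Dset r l \<in> sets borel"
  unfolding Dset_def by measurable

lemma pair_Dset_measurable:
  assumes [measurable]: "g \<in> borel_measurable borel"
  shows "(\<lambda>(u::real^'n, z::real^'n). ennreal (g (norm z)) * indicator (Dset r u) z) \<in> borel_measurable (lborel \<Otimes>\<^sub>M lborel)"
proof -
  have "(\<lambda>(u::real^'n, z::real^'n). ennreal (g (norm z)) * indicator (Dset r u) z)
      = (\<lambda>p. ennreal (g (norm (snd p))) * indicator {p::(real^'n) \<times> (real^'n). norm (snd p - fst p) \<le> norm (snd p) \<and> norm (snd p) < r} p)"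
    by (auto simp: Dset_def indicator_def fun_eq_iff)
  also have "\<dots> \<in> borel_measurable (lborel \<Otimes>\<^sub>M lborel)"
    by measurable
  finally show ?thesis .
qed

lemma psi_measurable:
  assumes [measurable]: "g \<in> borel_measurable borel"
  shows "(psi g r :: real^'n \<Rightarrow> ennreal) \<in> borel_measurable borel"
proof -
  have "(\<lambda>u::real^'n. \<integral>\<^sup>+ z. ennreal (g (norm z)) * indicator (Dset r u) z \<partial>lborel) \<in> borel_measurable lborel"
    using lborel.borel_measurable_nn_integral[OF pair_Dset_measurable[OF assms, of r]] by simp
  then show ?thesis unfolding psi_def[abs_def] by (simp cong: measurable_cong_sets)
qed

lemma psi_sym:
  fixes u v :: "real^'n"
  assumes [measurable]: "g \<in> borel_measurable borel" and uv: "norm u = norm v"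
  shows "psi g r u = psi g r v"
proof (cases "v = 0")
  case True then show ?thesis using uv by simp
next
  case False
  then have u0: "u \<noteq> 0" using uv by auto
  obtain H where H: "orthogonal_transformation H" "H ((1 / norm v) *\<^sub>R v) = (1 / norm u) *\<^sub>R u"
    using orthogonal_transformation_exists_1[of "(1 / norm v) *\<^sub>R v" "(1 / norm u) *\<^sub>R u"] False u0
    by (auto simp: norm_sgn)
  have Hv: "H v = u"
  proof -
    have "H v = norm v *\<^sub>R H ((1 / norm v) *\<^sub>R v)"
      using False by (simp add: orthogonal_transformation_scaleR[OF H(1)])
    also have "\<dots> = u" using H(2) uv u0 False by simp
    finally show ?thesis .
  qed
  have lin: "linear H" using H(1) orthogonal_transformation_linear by blast
  have nH: "norm (H x) = norm x" for x using orthogonal_transformation_norm[OF H(1)] by simp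
  have eq: "ennreal (g (norm z)) * indicator (Dset r v) z
      = (\<lambda>w. ennreal (g (norm w)) * indicator (Dset r u) w) (H z)" for z
  proof -
    have "norm (H z - u) = norm (z - v)"
      using nH[of "z - v"] by (simp add: linear_diff[OF lin] Hv)
    then show ?thesis by (simp add: Dset_def indicator_def nH)
  qed
  have "psi g r v = (\<integral>\<^sup>+ z. (\<lambda>w. ennreal (g (norm w)) * indicator (Dset r u) w) (H z) \<partial>lborel)"
    unfolding psi_def by (simp only: eq)
  also have "\<dots> = psi g r u"
    unfolding psi_def by (rule orth_nn_integral[OF H(1)]) measurable
  finally show ?thesis by simp
qed

lemma Dset_iff:
  fixes z w :: "real^'n"
  shows "norm (z - w) \<le> norm z \<longleftrightarrow> w \<bullet> w \<le> 2 * (z \<bullet> w)"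
proof -
  have "(z - w) \<bullet> (z - w) = z \<bullet> z - 2 * (z \<bullet> w) + w \<bullet> w"
    by (simp add: inner_diff_left inner_diff_right inner_commute)
  then show ?thesis unfolding norm_le by linarith
qed

lemma Dset_ray:
  fixes l :: "real^'n"
  assumes "0 \<le> s" "s \<le> 1"
  shows "Dset r l \<subseteq> Dset r (s *\<^sub>R l)"
proof
  fix z assume z: "z \<in> Dset r l"
  have h: "l \<bullet> l \<le> 2 * (z \<bullet> l)" using z Dset_iff[of z l] by (simp add: Dset_def)
  have "0 \<le> l \<bullet> l" by simp
  have "s * s * (l \<bullet> l) \<le> s * (l \<bullet> l)"
    using assms \<open>0 \<le> l \<bullet> l\<close> by (simp add: mult_right_le_one_le mult_right_mono mult_le_one)
  also have "\<dots> \<le> s * (2 * (z \<bullet> l))" using h assms by (simp add: mult_left_mono)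
  finally have "(s *\<^sub>R l) \<bullet> (s *\<^sub>R l) \<le> 2 * (z \<bullet> (s *\<^sub>R l))"
    by (simp add: algebra_simps)
  then show "z \<in> Dset r (s *\<^sub>R l)" using z Dset_iff[of z "s *\<^sub>R l"] by (simp add: Dset_def)
qed

lemma psi_mono:
  fixes u l :: "real^'n"
  assumes [measurable]: "g \<in> borel_measurable borel" and ul: "norm u \<le> norm l"
  shows "psi g r l \<le> psi g r u"
proof (cases "l = 0")
  case True then show ?thesis using ul by simp
next
  case False
  define s where "s = norm u / norm l"
  have s: "0 \<le> s" "s \<le> 1" using False ul by (auto simp: s_def)
  have ns: "norm (s *\<^sub>R l) = norm u" using False s by (simp add: s_def)
  have "psi g r l \<le> psi g r (s *\<^sub>R l)"
    unfolding psi_def using Dset_ray[OF s, of r l]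
    by (intro nn_integral_mono) (auto simp: indicator_def)
  also have "\<dots> = psi g r u" using psi_sym[OF assms(1) ns] by simp
  finally show ?thesis .
qed

lemma psi_zero:
  assumes "2 * r \<le> norm l"
  shows "psi g r l = 0"
proof -
  have "Dset r l = {}"
  proof (rule ccontr)
    assume "Dset r l \<noteq> {}"
    then obtain z where z: "norm (z - l) \<le> norm z" "norm z < r" by (auto simp: Dset_def)
    have "norm l \<le> norm (z - l) + norm z" using norm_triangle_ineq4[of z "z - l"] by simp
    then show False using z assms by linarith
  qed
  then show ?thesis by (simp add: psi_def)
qed


lemma layer_cake_count:
  fixes \<psi> :: "'a::euclidean_space \<Rightarrow> ennreal" and L :: "'a set"
  assumes L: "countable L" and psim[measurable]: "\<psi> \<in> borel_measurable borel"
    and fin: "\<And>u. \<psi> u < \<infinity>"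
    and bound: "\<And>t. 0 \<le> t \<Longrightarrow> emeasure (count_space L) {l\<in>L. t < enn2real (\<psi> l)}
                    \<le> C * emeasure lborel {u. t < enn2real (\<psi> u)}"
  shows "(\<integral>\<^sup>+ l. \<psi> l \<partial>count_space L) \<le> C * (\<integral>\<^sup>+ u. \<psi> u \<partial>lborel)"
proof -
  define \<phi> where "\<phi> u = enn2real (\<psi> u)" for u
  have \<phi>m[measurable]: "\<phi> \<in> borel_measurable borel" unfolding \<phi>_def[abs_def] by measurable
  have \<phi>0: "0 \<le> \<phi> u" for u by (simp add: \<phi>_def)
  have rep: "\<psi> x = (\<integral>\<^sup>+ t. indicator {0..<\<phi> x} t \<partial>lborel)" for x
  proof -
    have "\<psi> x = ennreal (\<phi> x)" using fin[of x] by (simp add: \<phi>_def ennreal_enn2real_if)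
    then show ?thesis using \<phi>0[of x] by simp
  qed
  have pm: "(\<lambda>(u, t). indicator {0..<\<phi> u} t :: ennreal) \<in> borel_measurable (lborel \<Otimes>\<^sub>M lborel)"
  proof -
    have "(\<lambda>(u, t). indicator {0..<\<phi> u} t :: ennreal) = (\<lambda>p. indicator {p. 0 \<le> snd p \<and> snd p < \<phi> (fst p)} p)"
      by (auto simp: indicator_def fun_eq_iff)
    also have "\<dots> \<in> borel_measurable (lborel \<Otimes>\<^sub>M lborel)" by measurable
    finally show ?thesis .
  qed
  have "(\<integral>\<^sup>+ l. \<psi> l \<partial>count_space L) = (\<integral>\<^sup>+ l. \<integral>\<^sup>+ t. indicator {0..<\<phi> l} t \<partial>lborel \<partial>count_space L)"
    by (subst rep) simp
  also have "\<dots> = (\<integral>\<^sup>+ t. \<integral>\<^sup>+ l. indicator {0..<\<phi> l} t \<partial>count_space L \<partial>lborel)"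
    by (rule nn_integral_count_space_nn_integral[symmetric]) (use L in auto)
  also have "\<dots> \<le> (\<integral>\<^sup>+ t. C * \<integral>\<^sup>+ u. indicator {0..<\<phi> u} t \<partial>lborel \<partial>lborel)"
  proof (rule nn_integral_mono)
    fix t :: real
    show "(\<integral>\<^sup>+ l. indicator {0..<\<phi> l} t \<partial>count_space L) \<le> C * \<integral>\<^sup>+ u. indicator {0..<\<phi> u} t \<partial>lborel"
    proof (cases "0 \<le> t")
      case False then show ?thesis by (simp add: indicator_def)
    next
      case True
      have "(\<integral>\<^sup>+ l. indicator {0..<\<phi> l} t \<partial>count_space L) = (\<integral>\<^sup>+ l. indicator {l\<in>L. t < \<phi> l} l \<partial>count_space L)"
        using True by (intro nn_integral_cong) (auto simp: indicator_def)
      also have "\<dots> = emeasure (count_space L) {l\<in>L. t < \<phi> l}"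
        by (rule nn_integral_indicator) auto
      also have "\<dots> \<le> C * emeasure lborel {u. t < \<phi> u}"
        using bound[OF True] by (simp add: \<phi>_def)
      also have "emeasure lborel {u. t < \<phi> u} = (\<integral>\<^sup>+ u. indicator {u. t < \<phi> u} u \<partial>lborel)"
        by (rule nn_integral_indicator[symmetric]) measurable
      also have "\<dots> = (\<integral>\<^sup>+ u. indicator {0..<\<phi> u} t \<partial>lborel)"
        using True by (intro nn_integral_cong) (auto simp: indicator_def)
      finally show ?thesis .
    qed
  qed
  also have "\<dots> = C * (\<integral>\<^sup>+ t. \<integral>\<^sup>+ u. indicator {0..<\<phi> u} t \<partial>lborel \<partial>lborel)"
    by (rule nn_integral_cmult) (use lborel.borel_measurable_nn_integral[OF measurable_pair_swap[OF pm]] in \<open>simp add: case_prod_beta\<close>)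
  also have "(\<integral>\<^sup>+ t. \<integral>\<^sup>+ u. indicator {0..<\<phi> u} t \<partial>lborel \<partial>lborel) = (\<integral>\<^sup>+ u. \<integral>\<^sup>+ t. indicator {0..<\<phi> u} t \<partial>lborel \<partial>lborel)"
    by (rule lborel_pair.Fubini'[OF pm])
  also have "\<dots> = (\<integral>\<^sup>+ u. \<psi> u \<partial>lborel)"
    by (subst rep) simp
  finally show ?thesis .
qed


lemma shell_sum_card:
  fixes L :: "(real^'n) set"
  assumes fin: "finite {l\<in>L - {0}. norm l \<le> c}"
  shows "real (card {l\<in>L - {0}. norm l \<le> c}) = shell_sum L \<delta> (exp \<delta> * c)"
proof -
  define A where "A = {l\<in>L - {0}. norm l \<le> c}"
  have R: "{\<rho>\<in>norm ` (L - {0}). exp \<delta> * \<rho> \<le> exp \<delta> * c} = norm ` A"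
    by (auto simp: A_def)
  have fib: "{l\<in>L. norm l = \<rho>} = {l\<in>A. norm l = \<rho>}" if "\<rho> \<in> norm ` A" for \<rho>
    using that by (auto simp: A_def)
  have "real (card A) = (\<Sum>x\<in>A. 1)" by simp
  also have "\<dots> = (\<Sum>\<rho>\<in>norm ` A. \<Sum>x\<in>{l\<in>A. norm l = \<rho>}. 1)"
    using fin unfolding A_def[symmetric] by (rule sum.image_gen)
  also have "\<dots> = (\<Sum>\<rho>\<in>norm ` A. real (card {l\<in>L. norm l = \<rho>}))"
    by (intro sum.cong refl) (simp add: fib)
  also have "\<dots> = shell_sum L \<delta> (exp \<delta> * c)"
    unfolding shell_sum_def R ..
  finally show ?thesis by (simp add: A_def)
qed

lemma count_t_bound:
  fixes B :: "real^'n^'n" and g :: "real \<Rightarrow> real" and r t \<delta> :: real and \<alpha>' :: "real \<Rightarrow> real"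
  assumes det: "det B \<noteq> 0" and gm[measurable]: "g \<in> borel_measurable borel" and r: "r > 0"
    and fin: "\<And>u::real^'n. psi g r u < \<infinity>"
    and \<alpha>A: "\<alpha>' \<in> A_set (lattice_of B) \<delta> (2*r)"
    and \<delta>: "\<delta> = ln (1 / \<bar>det B\<bar>) / real CARD('n)"
    and t: "0 \<le> t"
  shows "emeasure (count_space (lattice_of B - {0})) {l\<in>lattice_of B - {0}. t < enn2real (psi g r l)}
        \<le> (SUP x\<in>{0<..2 * exp \<delta> * r}. ennreal (\<alpha>' x)) * ennreal (1/\<bar>det B\<bar>)
            * emeasure lborel {u::real^'n. t < enn2real (psi g r u)}"
proof -
  define \<Lambda> where "\<Lambda> = lattice_of B"
  define S where "S = (SUP x\<in>{0<..2 * exp \<delta> * r}. ennreal (\<alpha>' x))"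
  define n where "n = CARD('n)"
  define Vn where "Vn = measure lborel (ball (0::real^'n) 1)"
  define \<beta> where "\<beta> = 1/\<bar>det B\<bar>"
  define Lt where "Lt = {l\<in>\<Lambda> - {0}. t < enn2real (psi g r l)}"
  have n1: "n \<ge> 1" by (simp add: n_def Suc_le_eq)
  have Vn0: "Vn > 0" unfolding Vn_def using content_ball_pos[of 1 "0::real^'n"] by simp
  have \<beta>0: "\<beta> > 0" using det by (simp add: \<beta>_def)
  have expn: "exp \<delta> ^ n = \<beta>"
  proof -
    have "exp \<delta> ^ n = exp (real n * \<delta>)" by (simp add: exp_of_nat_mult)
    also have "real n * \<delta> = ln \<beta>" using n1 by (simp add: \<delta> n_def \<beta>_def)
    finally show ?thesis using \<beta>0 by simp
  qed
  have psim[measurable]: "(psi g r :: real^'n \<Rightarrow> ennreal) \<in> borel_measurable borel"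
    by (rule psi_measurable[OF gm])
  show ?thesis
  proof (cases "Lt = {}")
    case True
    then have "{l\<in>lattice_of B - {0}. t < enn2real (psi g r l)} = {}" by (simp add: Lt_def \<Lambda>_def)
    then show ?thesis by (metis emeasure_empty zero_le)
  next
    case False
    have Lt_sub: "Lt \<subseteq> {l\<in>\<Lambda>. norm l \<le> 2*r}"
    proof
      fix l assume l: "l \<in> Lt"
      have "norm l < 2*r"
      proof (rule ccontr)
        assume "\<not> norm l < 2*r"
        then have "psi g r l = 0" by (intro psi_zero) simp
        then show False using l t by (simp add: Lt_def)
      qed
      then show "l \<in> {l\<in>\<Lambda>. norm l \<le> 2*r}" using l by (auto simp: Lt_def)
    qed
    have lt2r: "norm l < 2*r" if "l \<in> Lt" for l
    proof (rule ccontr)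
      assume "\<not> norm l < 2*r"
      then have "psi g r l = 0" by (intro psi_zero) simp
      then show False using that t by (simp add: Lt_def)
    qed
    have finLt: "finite Lt"
      using Lt_sub lattice_finite[OF det, of "2*r"] finite_subset unfolding \<Lambda>_def by blast
    define c where "c = Max (norm ` Lt)"
    have "c \<in> norm ` Lt" unfolding c_def using finLt False by (intro Max_in) auto
    then obtain l0 where l0: "l0 \<in> Lt" "norm l0 = c" by auto
    have cmax: "norm l \<le> c" if "l \<in> Lt" for l unfolding c_def using finLt that by (intro Max_ge) auto
    have c0: "c > 0" using l0 by (auto simp: Lt_def)
    have c2r: "c < 2*r" using lt2r[OF l0(1)] l0 by simp
    define A where "A = {l\<in>\<Lambda> - {0}. norm l \<le> c}"
    have finA: "finite A"
    proof -
      have "A \<subseteq> {l \<in> lattice_of B. norm l \<le> c}" by (auto simp: A_def \<Lambda>_def)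
      then show ?thesis using lattice_finite[OF det, of c] finite_subset by blast
    qed
    have LtA: "Lt \<subseteq> A" using cmax by (auto simp: A_def Lt_def)
    define T where "T = exp \<delta> * c"
    have T0: "T > 0" using c0 by (simp add: T_def)
    have T2: "T \<le> exp \<delta> * (2*r)" using c2r by (simp add: T_def)
    obtain N' where N': "\<forall>x>0. 0 \<le> N' x"
       "\<forall>x>0. \<alpha>' x = N' x / (real CARD('n) * measure lborel (ball (0::real^'n) 1) * x ^ (CARD('n) - 1))"
       "\<forall>t\<in>{0<..exp \<delta> * (2*r)}. ennreal (shell_sum \<Lambda> \<delta> t) \<le> (\<integral>\<^sup>+ x\<in>{0<..t}. ennreal (N' x) \<partial>lborel)"
      using \<alpha>A unfolding A_set_def \<Lambda>_def by blast
    have N'm: "\<forall>x>0. N' x = \<alpha>' x * (real n * Vn * x ^ (n - 1))"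
      using N'(2) Vn0 n1 by (auto simp: n_def Vn_def)
    have \<alpha>0: "\<forall>x>0. 0 \<le> \<alpha>' x" using N'(1) N'(2) Vn0 by (auto simp: Vn_def)
    have "emeasure (count_space (\<Lambda> - {0})) Lt = of_nat (card Lt)"
      using finLt by (intro emeasure_count_space_finite) (auto simp: Lt_def)
    also have "\<dots> \<le> of_nat (card A)" using card_mono[OF finA LtA] by simp
    also have "\<dots> = ennreal (real (card A))" by (rule ennreal_of_nat_eq_real_of_nat)
    also have "real (card A) = shell_sum \<Lambda> \<delta> T"
      unfolding A_def T_def by (rule shell_sum_card) (use finA in \<open>simp add: A_def\<close>)
    also have "ennreal (shell_sum \<Lambda> \<delta> T) \<le> (\<integral>\<^sup>+ x\<in>{0<..T}. ennreal (N' x) \<partial>lborel)"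
      using N'(3) T0 T2 by auto
    also have "\<dots> \<le> (\<integral>\<^sup>+ x. S * (ennreal (real n * Vn * x ^ (n - 1)) * indicator {0..T} x) \<partial>lborel)"
    proof (rule nn_integral_mono)
      fix x :: real
      show "ennreal (N' x) * indicator {0<..T} x \<le> S * (ennreal (real n * Vn * x ^ (n - 1)) * indicator {0..T} x)"
      proof (cases "x \<in> {0<..T}")
        case True
        then have x0: "x > 0" by simp
        have "ennreal (\<alpha>' x) \<le> S" unfolding S_def
          using True T2 by (intro SUP_upper) auto
        moreover have "ennreal (N' x) = ennreal (\<alpha>' x) * ennreal (real n * Vn * x ^ (n - 1))"
          using N'm \<alpha>0 x0 Vn0 by (simp add: ennreal_mult)
        ultimately show ?thesis using True by (simp add: mult_right_mono)
      qed simp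
    qed
    also have "\<dots> = S * (\<integral>\<^sup>+ x. ennreal (real n * Vn * x ^ (n - 1)) * indicator {0..T} x \<partial>lborel)"
      by (rule nn_integral_cmult) measurable
    also have "(\<integral>\<^sup>+ x. ennreal (real n * Vn * x ^ (n - 1)) * indicator {0..T} x \<partial>lborel) = ennreal (Vn * T ^ n - Vn * 0 ^ n)"
    proof (rule nn_integral_FTC_Icc)
      fix x :: real
      show "((\<lambda>x. Vn * x ^ n) has_real_derivative real n * Vn * x ^ (n - 1)) (at x)"
        using DERIV_cmult[OF DERIV_pow[of n x], of Vn] by (simp add: algebra_simps)
      show "0 \<le> real n * Vn * x ^ (n - 1)" if "x \<in> {0..T}" using that Vn0 by simp
    qed (use T0 in auto)
    also have "Vn * T ^ n - Vn * 0 ^ n = \<beta> * (c ^ n * Vn)"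
      using n1 by (simp add: T_def power_mult_distrib expn)
    also have "S * ennreal (\<beta> * (c ^ n * Vn)) = S * ennreal \<beta> * ennreal (c ^ n * Vn)"
      using \<beta>0 Vn0 c0 by (simp add: ennreal_mult mult.assoc)
    also have "ennreal (c ^ n * Vn) = emeasure lborel (ball (0::real^'n) c)"
      using emeasure_ball_cart(1)[of c "0::real^'n"] c0 by (simp add: n_def Vn_def)
    also have "emeasure lborel (ball (0::real^'n) c) \<le> emeasure lborel {u::real^'n. t < enn2real (psi g r u)}"
    proof -
      have sub: "ball 0 c \<subseteq> {u::real^'n. t < enn2real (psi g r u)}"
      proof
        fix u :: "real^'n" assume "u \<in> ball 0 c"
        then have "norm u \<le> norm l0" using l0 by simp
        then have "psi g r l0 \<le> psi g r u" by (rule psi_mono[OF gm])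
        then have "enn2real (psi g r l0) \<le> enn2real (psi g r u)"
          using fin[of u] by (intro enn2real_mono) auto
        then show "u \<in> {u::real^'n. t < enn2real (psi g r u)}" using l0 by (auto simp: Lt_def)
      qed
      have "{u::real^'n. t < enn2real (psi g r u)} \<in> sets lborel" by measurable
      then show ?thesis using emeasure_mono[OF sub] by blast
    qed
    finally show ?thesis
      by (simp add: S_def \<beta>_def Lt_def \<Lambda>_def mult_left_mono)
  qed
qed


lemma psi_integral:
  fixes g :: "real \<Rightarrow> real"
  assumes gm[measurable]: "g \<in> borel_measurable borel"
  shows "(\<integral>\<^sup>+ u. (psi g r u :: ennreal) \<partial>(lborel :: (real^'n) measure))
    = ennreal (measure lborel (ball (0::real^'n) 1))
      * (\<integral>\<^sup>+ z. ennreal (g (norm (z::real^'n))) * ennreal (norm z ^ CARD('n)) * indicator {z. norm z < r} z \<partial>lborel)"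
proof -
  define Vn where "Vn = measure lborel (ball (0::real^'n) 1)"
  have "(\<integral>\<^sup>+ u. (psi g r u :: ennreal) \<partial>(lborel :: (real^'n) measure))
      = (\<integral>\<^sup>+ u. \<integral>\<^sup>+ z. ennreal (g (norm (z::real^'n))) * indicator (Dset r u) z \<partial>lborel \<partial>lborel)"
    by (simp add: psi_def)
  also have "\<dots> = (\<integral>\<^sup>+ z. \<integral>\<^sup>+ u. ennreal (g (norm (z::real^'n))) * indicator (Dset r u) z \<partial>lborel \<partial>lborel)"
    by (rule lborel_pair.Fubini'[symmetric]) (rule pair_Dset_measurable[OF gm])
  also have "\<dots> = (\<integral>\<^sup>+ z. ennreal Vn * (ennreal (g (norm (z::real^'n))) * ennreal (norm z ^ CARD('n)) * indicator {z. norm z < r} z) \<partial>lborel)"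
  proof (rule nn_integral_cong)
    fix z :: "real^'n"
    have ind: "indicator (Dset r u) z = (indicator {z. norm z < r} z * indicator (cball z (norm z)) u :: ennreal)" for u
      by (auto simp: Dset_def indicator_def dist_norm)
    have "(\<integral>\<^sup>+ u. ennreal (g (norm z)) * indicator (Dset r u) z \<partial>lborel)
        = (\<integral>\<^sup>+ u. (ennreal (g (norm z)) * indicator {z. norm z < r} z) * indicator (cball z (norm z)) u \<partial>lborel)"
      by (simp add: ind mult.assoc)
    also have "\<dots> = (ennreal (g (norm z)) * indicator {z. norm z < r} z) * emeasure lborel (cball z (norm z))"
      by (rule nn_integral_cmult_indicator) simp
    also have "emeasure lborel (cball z (norm z)) = ennreal (norm z ^ CARD('n) * Vn)"
      using emeasure_ball_cart(2)[of "norm z" z] by (simp add: Vn_def)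
    also have "(ennreal (g (norm z)) * indicator {z. norm z < r} z) * ennreal (norm z ^ CARD('n) * Vn)
       = ennreal Vn * (ennreal (g (norm z)) * ennreal (norm z ^ CARD('n)) * indicator {z. norm z < r} z)"
      by (simp add: ennreal_mult mult_ac Vn_def)
    finally show "(\<integral>\<^sup>+ u. ennreal (g (norm z)) * indicator (Dset r u) z \<partial>lborel) = \<dots>" .
  qed
  also have "\<dots> = ennreal Vn * (\<integral>\<^sup>+ z. ennreal (g (norm (z::real^'n))) * ennreal (norm z ^ CARD('n)) * indicator {z. norm z < r} z \<partial>lborel)"
    by (rule nn_integral_cmult) measurable
  finally show ?thesis by (simp add: Vn_def)
qed


lemma bound_r:
  fixes B :: "real^'n^'n" and g :: "real \<Rightarrow> real" and f :: "real \<Rightarrow> ennreal"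
    and M :: "(real^'n) measure" and r :: real
  assumes det: "det B \<noteq> 0"
    and gm[measurable]: "g \<in> borel_measurable borel"
    and Mdef: "M = density lborel (\<lambda>z. ennreal (g (norm z)))"
    and P: "prob_space M"
    and dist: "distributed M lborel norm f"
    and r: "r > 0"
  shows "emeasure M (UNIV - voronoi0 (lattice_of B))
     \<le> alpha_fn (lattice_of B) (ln (1 / \<bar>det B\<bar>) / real CARD('n)) r * ennreal (1 / \<bar>det B\<bar>)
         * ennreal (measure lborel (ball (0::real^'n) 1))
         * (\<integral>\<^sup>+ \<rho>\<in>{0..r}. f \<rho> * ennreal (\<rho> ^ CARD('n)) \<partial>lborel)
       + (\<integral>\<^sup>+ \<rho>\<in>{r..}. f \<rho> \<partial>lborel)"
proof -
  define \<Lambda> where "\<Lambda> = lattice_of B"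
  define \<delta> where "\<delta> = ln (1 / \<bar>det B\<bar>) / real CARD('n)"
  define \<beta> where "\<beta> = 1 / \<bar>det B\<bar>"
  define Vn where "Vn = measure lborel (ball (0::real^'n) 1)"
  define n where "n = CARD('n)"
  define L' where "L' = \<Lambda> - {0}"
  define U where "U = (\<Union>l\<in>L'. Dset r l)"
  define I where "I = (\<integral>\<^sup>+ \<rho>\<in>{0..r}. f \<rho> * ennreal (\<rho> ^ CARD('n)) \<partial>lborel)"
  define T where "T = (\<integral>\<^sup>+ \<rho>\<in>{r..}. f \<rho> \<partial>lborel)"
  define YM where "YM = (\<integral>\<^sup>+ z. ennreal (norm z ^ n * indicator {0..<r} (norm z)) \<partial>M)"
  define \<alpha> where "\<alpha> = alpha_fn \<Lambda> \<delta> r"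
  define Sf where "Sf \<alpha>' = (SUP x\<in>{0<..2 * exp \<delta> * r}. ennreal (\<alpha>' x))" for \<alpha>' :: "real \<Rightarrow> real"
  have \<alpha>_eq: "\<alpha> = (INF \<alpha>'\<in>A_set \<Lambda> \<delta> (2 * r). Sf \<alpha>')"
    by (simp add: \<alpha>_def alpha_fn_def Sf_def)
  interpret P: prob_space M by (rule P)
  have sM[measurable_cong]: "sets M = sets borel" by (simp add: Mdef)
  have spM: "space M = UNIV" by (simp add: Mdef)
  have n1: "n \<ge> 1" by (simp add: n_def Suc_le_eq)
  have Vn0: "Vn > 0" unfolding Vn_def using content_ball_pos[of 1 "0::real^'n"] by simp
  have \<beta>0: "\<beta> > 0" using det by (simp add: \<beta>_def)
  have cL: "countable L'"
    unfolding L'_def \<Lambda>_def using lattice_countable[OF det] by (rule countable_subset[rotated]) auto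
  have Us: "U \<in> sets M"
    unfolding sM U_def by (rule sets.countable_UN'') (use cL in auto)
  have Rs: "{z::real^'n. r \<le> norm z} \<in> sets M" unfolding sM by measurable
  have sub: "UNIV - voronoi0 \<Lambda> \<subseteq> U \<union> {z. r \<le> norm z}"
  proof
    fix z assume "z \<in> UNIV - voronoi0 \<Lambda>"
    then obtain l where l: "l \<in> \<Lambda> - {0}" "\<not> norm z < norm (z - l)" by (auto simp: voronoi0_def)
    show "z \<in> U \<union> {z. r \<le> norm z}"
    proof (cases "norm z < r")
      case True
      then have "z \<in> Dset r l" using l by (auto simp: Dset_def)
      then show ?thesis using l by (auto simp: U_def L'_def)
    qed auto
  qed
  have step2: "emeasure M (UNIV - voronoi0 \<Lambda>) \<le> emeasure M U + emeasure M {z. r \<le> norm z}"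
  proof -
    have "emeasure M (UNIV - voronoi0 \<Lambda>) \<le> emeasure M (U \<union> {z. r \<le> norm z})"
      using emeasure_mono[OF sub] Us Rs by blast
    also have "\<dots> \<le> emeasure M U + emeasure M {z. r \<le> norm z}"
      using Us Rs by (rule emeasure_subadditive)
    finally show ?thesis .
  qed
  have step3: "emeasure M {z. r \<le> norm z} = T"
  proof -
    have "emeasure M (norm -` {r..} \<inter> space M) = (\<integral>\<^sup>+x. f x * indicator {r..} x \<partial>lborel)"
      by (rule distributed_emeasure[OF dist]) simp
    moreover have "norm -` {r..} \<inter> space M = {z. r \<le> norm z}" by (auto simp: spM)
    ultimately show ?thesis by (simp add: T_def)
  qed
  have psiM: "emeasure M (Dset r l) = psi g r l" for l :: "real^'n"
    by (simp add: Mdef emeasure_density psi_def)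
  have fin: "psi g r u < \<infinity>" for u :: "real^'n"
    using P.emeasure_le_1[of "Dset r u"] psiM[of u] by (simp add: top_unique le_less_trans)
  have step5: "emeasure M U \<le> (\<integral>\<^sup>+ l. psi g r l \<partial>count_space L')"
  proof -
    have "emeasure M U = (\<integral>\<^sup>+ z. indicator U z \<partial>M)"
      using Us by simp
    also have "\<dots> \<le> (\<integral>\<^sup>+ z. \<integral>\<^sup>+ l. indicator (Dset r l) z \<partial>count_space L' \<partial>M)"
    proof (rule nn_integral_mono)
      fix z assume "z \<in> space M"
      show "indicator U z \<le> (\<integral>\<^sup>+ l. indicator (Dset r l) z \<partial>count_space L')"
      proof (cases "z \<in> U")
        case True
        then obtain l0 where l0: "l0 \<in> L'" "z \<in> Dset r l0" by (auto simp: U_def)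
        have "(1::ennreal) = (\<integral>\<^sup>+ l. indicator (Dset r l) z * indicator {l0} l \<partial>count_space L')"
          using l0 by simp
        also have "\<dots> \<le> (\<integral>\<^sup>+ l. indicator (Dset r l) z \<partial>count_space L')"
          by (intro nn_integral_mono) (auto simp: indicator_def)
        finally show ?thesis using True by simp
      qed simp
    qed
    also have "\<dots> = (\<integral>\<^sup>+ l. \<integral>\<^sup>+ z. indicator (Dset r l) z \<partial>M \<partial>count_space L')"
      by (rule nn_integral_count_space_nn_integral) (use cL in \<open>auto simp: sM\<close>)
    also have "\<dots> = (\<integral>\<^sup>+ l. psi g r l \<partial>count_space L')"
      by (intro nn_integral_cong) (simp add: psiM[symmetric] sM)
    finally show ?thesis .
  qed
  have psiInt: "(\<integral>\<^sup>+ u. (psi g r u :: ennreal) \<partial>(lborel :: (real^'n) measure)) = ennreal Vn * YM"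
  proof -
    have "(\<integral>\<^sup>+ z. ennreal (g (norm (z::real^'n))) * ennreal (norm z ^ CARD('n)) * indicator {z. norm z < r} z \<partial>lborel)
        = (\<integral>\<^sup>+ z. ennreal (g (norm (z::real^'n))) * ennreal (norm z ^ n * indicator {0..<r} (norm z)) \<partial>lborel)"
      by (intro nn_integral_cong) (auto simp: indicator_def n_def)
    also have "\<dots> = YM"
      unfolding YM_def Mdef by (rule nn_integral_density[symmetric]) measurable
    moreover have "(\<integral>\<^sup>+ u. (psi g r u :: ennreal) \<partial>(lborel :: (real^'n) measure))
      = ennreal Vn * (\<integral>\<^sup>+ z. ennreal (g (norm (z::real^'n))) * ennreal (norm z ^ CARD('n)) * indicator {z. norm z < r} z \<partial>lborel)"
      unfolding Vn_def by (rule psi_integral[OF gm])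
    ultimately show ?thesis by simp
  qed
  have step7: "emeasure M U \<le> Sf \<alpha>' * ennreal \<beta> * ennreal Vn * YM" if \<alpha>': "\<alpha>' \<in> A_set \<Lambda> \<delta> (2 * r)" for \<alpha>'
  proof -
    have "(\<integral>\<^sup>+ l. psi g r l \<partial>count_space L') \<le> (Sf \<alpha>' * ennreal \<beta>) * (\<integral>\<^sup>+ u. (psi g r u :: ennreal) \<partial>(lborel :: (real^'n) measure))"
    proof (rule layer_cake_count)
      show "countable L'" by (rule cL)
      show "psi g r \<in> borel_measurable borel" by (rule psi_measurable[OF gm])
      show "psi g r u < \<infinity>" for u :: "real^'n" by (rule fin)
      fix t :: real assume t: "0 \<le> t"
      show "emeasure (count_space L') {l \<in> L'. t < enn2real (psi g r l)}
            \<le> Sf \<alpha>' * ennreal \<beta> * emeasure lborel {u::real^'n. t < enn2real (psi g r u)}"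
        unfolding L'_def \<Lambda>_def Sf_def \<beta>_def
        using count_t_bound[OF det gm r fin \<alpha>'[unfolded \<Lambda>_def] \<delta>_def t] .
    qed
    then show ?thesis using step5 psiInt by (simp add: mult.assoc)
  qed
  have step8: "YM \<le> I"
  proof -
    have "YM = (\<integral>\<^sup>+ \<rho>. f \<rho> * ennreal (\<rho> ^ n * indicator {0..<r} \<rho>) \<partial>lborel)"
      unfolding YM_def by (rule distributed_nn_integral[OF dist, symmetric]) measurable
    also have "\<dots> \<le> I" unfolding I_def
      by (intro nn_integral_mono) (auto simp: indicator_def n_def)
    finally show ?thesis .
  qed
  have intf: "(\<integral>\<^sup>+ \<rho>. f \<rho> \<partial>lborel) = 1"
  proof -
    have "emeasure M (norm -` UNIV \<inter> space M) = (\<integral>\<^sup>+x. f x * indicator UNIV x \<partial>lborel)"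
      by (rule distributed_emeasure[OF dist]) simp
    then show ?thesis using P.emeasure_space_1 by simp
  qed
  have Ifin: "I < \<infinity>"
  proof -
    have "I \<le> (\<integral>\<^sup>+ \<rho>. ennreal (r ^ n) * f \<rho> \<partial>lborel)" unfolding I_def
      by (intro nn_integral_mono) (auto simp: indicator_def n_def mult.commute intro!: mult_left_mono power_mono)
    also have "\<dots> = ennreal (r ^ n)"
      using intf by (subst nn_integral_cmult) (use distributed_borel_measurable[OF dist] in auto)
    finally show ?thesis by (simp add: le_less_trans)
  qed
  have step10: "emeasure M U \<le> \<top> * YM"
  proof -
    have "emeasure M U = (\<integral>\<^sup>+ z. indicator U z \<partial>M)" using Us by simp
    also have "\<dots> \<le> (\<integral>\<^sup>+ z. \<top> * ennreal (norm z ^ n * indicator {0..<r} (norm z)) \<partial>M)"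
    proof (rule nn_integral_mono)
      fix z :: "real^'n"
      show "indicator U z \<le> \<top> * ennreal (norm z ^ n * indicator {0..<r} (norm z))"
      proof (cases "z \<in> U")
        case True
        then obtain l where l: "l \<in> L'" "z \<in> Dset r l" by (auto simp: U_def)
        have z0: "z \<noteq> 0"
        proof
          assume "z = 0" then show False using l by (auto simp: Dset_def L'_def)
        qed
        have "norm z < r" using l by (simp add: Dset_def)
        then have "0 < norm z ^ n * indicator {0..<r} (norm z)" using z0 by (simp add: indicator_def)
        then have ne: "ennreal (norm z ^ n * indicator {0..<r} (norm z)) \<noteq> 0"
          by (metis ennreal_less_zero_iff less_irrefl)
        have "\<top> * ennreal (norm z ^ n * indicator {0..<r} (norm z)) = \<top>"
          using ne by (simp only: ennreal_top_mult if_False)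
        then show ?thesis by simp
      qed simp
    qed
    also have "\<dots> = \<top> * YM" unfolding YM_def by (rule nn_integral_cmult) measurable
    finally show ?thesis .
  qed
  have step11: "emeasure M U \<le> \<alpha> * (ennreal \<beta> * ennreal Vn * YM)"
  proof (cases "YM = 0")
    case True then show ?thesis using step10 by simp
  next
    case False
    define k where "k = ennreal \<beta> * ennreal Vn * YM"
    have k0: "k \<noteq> 0" using False \<beta>0 Vn0 by (simp add: k_def)
    have kfin: "k < \<top>" using step8 Ifin by (simp add: k_def ennreal_mult_less_top le_less_trans)
    show ?thesis
    proof (cases "\<alpha> = \<top>")
      case True then show ?thesis using k0 by (simp add: k_def[symmetric] ennreal_top_mult)
    next
      case False
      show ?thesis unfolding k_def[symmetric]
      proof (rule ennreal_le_epsilon)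
        fix e :: real assume e: "0 < e"
        define K where "K = enn2real k"
        have kK: "k = ennreal K" using kfin by (simp add: K_def ennreal_enn2real_if)
        have K0: "0 \<le> K" by (simp add: K_def)
        define e' where "e' = e / (K + 1)"
        have e'0: "0 < e'" using e K0 by (simp add: e'_def)
        obtain \<alpha>' where \<alpha>': "\<alpha>' \<in> A_set \<Lambda> \<delta> (2 * r)" "Sf \<alpha>' < \<alpha> + ennreal e'"
        proof -
          have "\<alpha> \<noteq> \<infinity>" using False by simp
          then show ?thesis using INF_approx_ennreal[OF e'0 \<alpha>_eq] that by blast
        qed
        have "emeasure M U \<le> Sf \<alpha>' * k" using step7[OF \<alpha>'(1)] by (simp add: k_def mult.assoc)
        also have "\<dots> \<le> (\<alpha> + ennreal e') * k" using \<alpha>'(2) by (intro mult_right_mono) auto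
        also have "\<dots> = \<alpha> * k + ennreal (e' * K)" using e'0 K0 by (simp add: distrib_right kK ennreal_mult)
        also have "e' * K \<le> e"
        proof -
          have "e' * K = e * (K / (K + 1))" by (simp add: e'_def)
          also have "\<dots> \<le> e * 1" using e K0 by (intro mult_left_mono) auto
          finally show ?thesis by simp
        qed
        then have "\<alpha> * k + ennreal (e' * K) \<le> \<alpha> * k + ennreal e" by (intro add_left_mono ennreal_leI)
        finally show "emeasure M U \<le> \<alpha> * k + ennreal e" .
      qed
    qed
  qed
  have "emeasure M (UNIV - voronoi0 \<Lambda>) \<le> \<alpha> * (ennreal \<beta> * ennreal Vn * I) + T"
  proof -
    have "\<alpha> * (ennreal \<beta> * ennreal Vn * YM) \<le> \<alpha> * (ennreal \<beta> * ennreal Vn * I)"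
      using step8 by (intro mult_left_mono) auto
    then show ?thesis using step2 step3 step11 by (metis add_right_mono order_trans)
  qed
  then show ?thesis
    by (simp add: \<Lambda>_def \<alpha>_def \<delta>_def \<beta>_def Vn_def I_def T_def mult.assoc)
qed


theorem theorem5:
  fixes B :: "real^'n^'n" and g :: "real \<Rightarrow> real" and f :: "real \<Rightarrow> ennreal"
    and M :: "(real^'n) measure" and r :: real
  assumes "det B \<noteq> 0"
    and "\<forall>\<rho>\<ge>0. 0 \<le> g \<rho>"
    and "\<forall>a b. 0 \<le> a \<longrightarrow> a \<le> b \<longrightarrow> g b \<le> g a"
    and "g \<in> borel_measurable borel"
    and "M = density lborel (\<lambda>z. ennreal (g (norm z)))"
    and "prob_space M"
    and "distributed M lborel norm f"
    and "r > 0"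
  defines "\<Lambda>0 \<equiv> lattice_of B"
    and "\<beta> \<equiv> 1 / \<bar>det B\<bar>"
    and "\<delta> \<equiv> ln (1 / \<bar>det B\<bar>) / real CARD('n)"
    and "Vn \<equiv> measure lborel (ball (0::real^'n) 1)"
  shows "(emeasure M (UNIV - voronoi0 \<Lambda>0)
           \<le> alpha_fn \<Lambda>0 \<delta> r * ennreal \<beta> * ennreal Vn
               * (\<integral>\<^sup>+ \<rho>\<in>{0..r}. f \<rho> * ennreal (\<rho> ^ CARD('n)) \<partial>lborel)
             + (\<integral>\<^sup>+ \<rho>\<in>{r..}. f \<rho> \<partial>lborel))
         \<and> emeasure M (UNIV - voronoi0 \<Lambda>0)
           \<le> (INF s\<in>{0<..}. alpha_fn \<Lambda>0 \<delta> s * ennreal \<beta> * ennreal Vn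
               * (\<integral>\<^sup>+ \<rho>\<in>{0..s}. f \<rho> * ennreal (\<rho> ^ CARD('n)) \<partial>lborel)
             + (\<integral>\<^sup>+ \<rho>\<in>{s..}. f \<rho> \<partial>lborel))"
proof -
  have all: "emeasure M (UNIV - voronoi0 \<Lambda>0)
           \<le> alpha_fn \<Lambda>0 \<delta> s * ennreal \<beta> * ennreal Vn
               * (\<integral>\<^sup>+ \<rho>\<in>{0..s}. f \<rho> * ennreal (\<rho> ^ CARD('n)) \<partial>lborel)
             + (\<integral>\<^sup>+ \<rho>\<in>{s..}. f \<rho> \<partial>lborel)" if s: "s > 0" for s
    unfolding \<Lambda>0_def \<beta>_def \<delta>_def Vn_def
    by (rule bound_r[OF assms(1) assms(4) assms(5) assms(6) assms(7) s])
  show ?thesis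
  proof
    show "emeasure M (UNIV - voronoi0 \<Lambda>0)
           \<le> alpha_fn \<Lambda>0 \<delta> r * ennreal \<beta> * ennreal Vn
               * (\<integral>\<^sup>+ \<rho>\<in>{0..r}. f \<rho> * ennreal (\<rho> ^ CARD('n)) \<partial>lborel)
             + (\<integral>\<^sup>+ \<rho>\<in>{r..}. f \<rho> \<partial>lborel)"
      using all[OF assms(8)] .
    show "emeasure M (UNIV - voronoi0 \<Lambda>0)
           \<le> (INF s\<in>{0<..}. alpha_fn \<Lambda>0 \<delta> s * ennreal \<beta> * ennreal Vn
               * (\<integral>\<^sup>+ \<rho>\<in>{0..s}. f \<rho> * ennreal (\<rho> ^ CARD('n)) \<partial>lborel)
             + (\<integral>\<^sup>+ \<rho>\<in>{s..}. f \<rho> \<partial>lborel))"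
      by (rule INF_greatest) (use all in auto)
  qed
qed

end
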